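(* Let $D$ be a connected locally semicomplete digraph in which no inclusion-wise maximal weak hub is mixed, and let $X,Y$ be two distinct inclusion-wise maximal weak hubs. Then exactly one of the following holds: there is no arc between $X$ and $Y$; or for all $x\in X,y\in Y$, $xy$ is an arc and $yx$ is not; or for all $x\in X,y\in Y$, $yx$ is an arc and $xy$ is not.
   Context: Digraphs are finite, no loops, no parallel arcs; digons allowed. $x^+$, $x^-$ are out- and in-neighbourhoods. Semicomplete: any two distinct vertices are joined by at least one arc; locally semicomplete: every $x^+$ and every $x^-$ induces a semicomplete digraph. A weak hub is a set $X\subseteq V(D)$ with $D[X]$ strongly connected such that some vertex $x$ satisfies $X\subseteq x^-\setminus x^+$ or $X\subseteq x^+\setminus x^-$. A weak hub $X$ is mixed if there exist $x\notin X$ and $u,v\in X$ such that $xu$ and $vx$ are arcs. *)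

theory Defs
  imports Main
begin

text \<open>A digraph is given by a finite vertex set V and an arc set A \<subseteq> V \<times> V
  without loops (parallel arcs are impossible since A is a set; digons allowed).\<close>

definition digraph :: "'a set \<Rightarrow> ('a \<times> 'a) set \<Rightarrow> bool" where
  "digraph V A \<longleftrightarrow> finite V \<and> A \<subseteq> V \<times> V \<and> (\<forall>x. (x, x) \<notin> A)"

definition out_nbhd :: "('a \<times> 'a) set \<Rightarrow> 'a \<Rightarrow> 'a set" where
  "out_nbhd A x = {y. (x, y) \<in> A}"

definition in_nbhd :: "('a \<times> 'a) set \<Rightarrow> 'a \<Rightarrow> 'a set" where
  "in_nbhd A x = {y. (y, x) \<in> A}"

definition semicomplete_on :: "('a \<times> 'a) set \<Rightarrow> 'a set \<Rightarrow> bool" where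
  "semicomplete_on A S \<longleftrightarrow> (\<forall>u\<in>S. \<forall>v\<in>S. u \<noteq> v \<longrightarrow> (u, v) \<in> A \<or> (v, u) \<in> A)"

definition locally_semicomplete :: "'a set \<Rightarrow> ('a \<times> 'a) set \<Rightarrow> bool" where
  "locally_semicomplete V A \<longleftrightarrow>
     (\<forall>x\<in>V. semicomplete_on A (out_nbhd A x) \<and> semicomplete_on A (in_nbhd A x))"

definition connected_digraph :: "'a set \<Rightarrow> ('a \<times> 'a) set \<Rightarrow> bool" where
  "connected_digraph V A \<longleftrightarrow> V \<noteq> {} \<and> (\<forall>u\<in>V. \<forall>v\<in>V. (u, v) \<in> (A \<union> A\<inverse>)\<^sup>*)"

definition strongly_connected_on :: "('a \<times> 'a) set \<Rightarrow> 'a set \<Rightarrow> bool" where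
  "strongly_connected_on A X \<longleftrightarrow> X \<noteq> {} \<and> (\<forall>u\<in>X. \<forall>v\<in>X. (u, v) \<in> (A \<inter> (X \<times> X))\<^sup>*)"

definition weak_hub :: "'a set \<Rightarrow> ('a \<times> 'a) set \<Rightarrow> 'a set \<Rightarrow> bool" where
  "weak_hub V A X \<longleftrightarrow> X \<subseteq> V \<and> strongly_connected_on A X \<and>
     (\<exists>x\<in>V. X \<subseteq> in_nbhd A x - out_nbhd A x \<or> X \<subseteq> out_nbhd A x - in_nbhd A x)"

definition maximal_weak_hub :: "'a set \<Rightarrow> ('a \<times> 'a) set \<Rightarrow> 'a set \<Rightarrow> bool" where
  "maximal_weak_hub V A X \<longleftrightarrow> weak_hub V A X \<and> (\<forall>Z. weak_hub V A Z \<and> X \<subseteq> Z \<longrightarrow> Z = X)"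

definition mixed :: "'a set \<Rightarrow> ('a \<times> 'a) set \<Rightarrow> 'a set \<Rightarrow> bool" where
  "mixed V A X \<longleftrightarrow> (\<exists>x\<in>V - X. \<exists>u\<in>X. \<exists>v\<in>X. (x, u) \<in> A \<and> (v, x) \<in> A)"

end

theory Submission
  imports Defs
begin

lemma U_out:
  assumes AV: "A \<subseteq> V \<times> V" and ls: "locally_semicomplete V A"
    and sc: "strongly_connected_on A X" and nm: "\<not> mixed V A X"
    and z: "z \<in> V" "z \<notin> X" and u: "u \<in> X" and zu: "(z, u) \<in> A"
  shows "\<forall>v\<in>X. (z, v) \<in> A \<and> (v, z) \<notin> A"
proof
  fix v assume v: "v \<in> X"
  have nr: "\<forall>v'\<in>X. (v', z) \<notin> A" using nm z u zu unfolding mixed_def by blast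
  have "(v, u) \<in> (A \<inter> X \<times> X)\<^sup>*" using sc v u unfolding strongly_connected_on_def by blast
  then have "(z, v) \<in> A"
  proof (induction rule: converse_rtrancl_induct)
    case base then show ?case using zu by simp
  next
    case (step a b)
    then have ab: "(a, b) \<in> A" "a \<in> X" "b \<in> X" by auto
    have "b \<in> V" using ab AV by auto
    then have "semicomplete_on A (in_nbhd A b)" using ls unfolding locally_semicomplete_def by blast
    moreover have "a \<in> in_nbhd A b" "z \<in> in_nbhd A b" using ab step.IH unfolding in_nbhd_def by auto
    moreover have "a \<noteq> z" using ab z by auto
    ultimately have "(a, z) \<in> A \<or> (z, a) \<in> A" unfolding semicomplete_on_def by blast
    then show ?case using nr ab by blast
  qed
  then show "(z, v) \<in> A \<and> (v, z) \<notin> A" using nr v by blast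
qed

lemma U_in:
  assumes AV: "A \<subseteq> V \<times> V" and ls: "locally_semicomplete V A"
    and sc: "strongly_connected_on A X" and nm: "\<not> mixed V A X"
    and z: "z \<in> V" "z \<notin> X" and u: "u \<in> X" and zu: "(u, z) \<in> A"
  shows "\<forall>v\<in>X. (v, z) \<in> A \<and> (z, v) \<notin> A"
proof
  fix v assume v: "v \<in> X"
  have nr: "\<forall>v'\<in>X. (z, v') \<notin> A" using nm z u zu unfolding mixed_def by blast
  have "(u, v) \<in> (A \<inter> X \<times> X)\<^sup>*" using sc v u unfolding strongly_connected_on_def by blast
  then have "(v, z) \<in> A"
  proof (induction rule: rtrancl_induct)
    case base then show ?case using zu by simp
  next
    case (step b a)
    then have ab: "(b, a) \<in> A" "a \<in> X" "b \<in> X" by auto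
    have "b \<in> V" using ab AV by auto
    then have "semicomplete_on A (out_nbhd A b)" using ls unfolding locally_semicomplete_def by blast
    moreover have "a \<in> out_nbhd A b" "z \<in> out_nbhd A b" using ab step.IH unfolding out_nbhd_def by auto
    moreover have "a \<noteq> z" using ab z by auto
    ultimately have "(a, z) \<in> A \<or> (z, a) \<in> A" unfolding semicomplete_on_def by blast
    then show ?case using nr ab by blast
  qed
  then show "(v, z) \<in> A \<and> (z, v) \<notin> A" using nr v by blast
qed

lemma leave:
  assumes "(a, b) \<in> (A \<inter> Y \<times> Y)\<^sup>*" "a \<in> S" "b \<notin> S"
  shows "\<exists>c d. (c, d) \<in> A \<and> c \<in> S \<and> c \<in> Y \<and> d \<in> Y \<and> d \<notin> S"
  using assms by (induction rule: rtrancl_induct) auto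

lemma hub_semi:
  assumes "weak_hub V A Y" and ls: "locally_semicomplete V A" shows "semicomplete_on A Y"
proof -
  obtain x where x: "x \<in> V" "Y \<subseteq> in_nbhd A x - out_nbhd A x \<or> Y \<subseteq> out_nbhd A x - in_nbhd A x"
    using assms unfolding weak_hub_def by blast
  have s: "semicomplete_on A (in_nbhd A x)" "semicomplete_on A (out_nbhd A x)"
    using ls x(1) unfolding locally_semicomplete_def by auto
  from x(2) have "Y \<subseteq> in_nbhd A x \<or> Y \<subseteq> out_nbhd A x" by blast
  then show ?thesis
  proof
    assume "Y \<subseteq> in_nbhd A x" then show ?thesis using s(1) unfolding semicomplete_on_def by blast
  next
    assume "Y \<subseteq> out_nbhd A x" then show ?thesis using s(2) unfolding semicomplete_on_def by blast
  qed
qed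

theorem claim4p6:
  fixes V :: "'a set" and A :: "('a \<times> 'a) set" and X Y :: "'a set"
  assumes "digraph V A"
    and "connected_digraph V A"
    and "locally_semicomplete V A"
    and "\<forall>Z. maximal_weak_hub V A Z \<longrightarrow> \<not> mixed V A Z"
    and "maximal_weak_hub V A X" and "maximal_weak_hub V A Y" and "X \<noteq> Y"
  shows "(let P1 = (\<forall>x\<in>X. \<forall>y\<in>Y. (x, y) \<notin> A \<and> (y, x) \<notin> A);
              P2 = (\<forall>x\<in>X. \<forall>y\<in>Y. (x, y) \<in> A \<and> (y, x) \<notin> A);
              P3 = (\<forall>x\<in>X. \<forall>y\<in>Y. (y, x) \<in> A \<and> (x, y) \<notin> A)
          in (P1 \<and> \<not> P2 \<and> \<not> P3) \<or> (\<not> P1 \<and> P2 \<and> \<not> P3) \<or> (\<not> P1 \<and> \<not> P2 \<and> P3))"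
proof -
  define P1 where "P1 = (\<forall>x\<in>X. \<forall>y\<in>Y. (x, y) \<notin> A \<and> (y, x) \<notin> A)"
  define P2 where "P2 = (\<forall>x\<in>X. \<forall>y\<in>Y. (x, y) \<in> A \<and> (y, x) \<notin> A)"
  define P3 where "P3 = (\<forall>x\<in>X. \<forall>y\<in>Y. (y, x) \<in> A \<and> (x, y) \<notin> A)"
  have AV: "A \<subseteq> V \<times> V" using assms(1) unfolding digraph_def by blast
  note ls = assms(3)
  have hX: "weak_hub V A X" and hY: "weak_hub V A Y"
    using assms(5,6) unfolding maximal_weak_hub_def by auto
  have XV: "X \<subseteq> V" and YV: "Y \<subseteq> V" using hX hY unfolding weak_hub_def by auto
  have scX: "strongly_connected_on A X" and scY: "strongly_connected_on A Y"
    using hX hY unfolding weak_hub_def by auto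
  have nmX: "\<not> mixed V A X" and nmY: "\<not> mixed V A Y" using assms(4,5,6) by auto
  obtain x0 where x0: "x0 \<in> X" using scX unfolding strongly_connected_on_def by blast
  obtain y0 where y0: "y0 \<in> Y" using scY unfolding strongly_connected_on_def by blast
  have excl: "\<not> (P1 \<and> P2) \<and> \<not> (P1 \<and> P3) \<and> \<not> (P2 \<and> P3)"
    unfolding P1_def P2_def P3_def using x0 y0 by blast
  have one: "P1 \<or> P2 \<or> P3"
  proof (cases "X \<inter> Y = {}")
    case True
    show ?thesis
    proof (cases "\<exists>x\<in>X. \<exists>y\<in>Y. (x, y) \<in> A")
      case True
      then obtain x y where xy: "x \<in> X" "y \<in> Y" "(x, y) \<in> A" by blast
      have yX: "y \<notin> X" using xy \<open>X \<inter> Y = {}\<close> by blast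
      have a: "\<forall>x'\<in>X. (x', y) \<in> A \<and> (y, x') \<notin> A"
        using U_in[OF AV ls scX nmX _ yX xy(1) xy(3)] xy YV by blast
      have "P2" unfolding P2_def
      proof (intro ballI)
        fix x' y' assume x': "x' \<in> X" and y': "y' \<in> Y"
        have "x' \<notin> Y" using x' \<open>X \<inter> Y = {}\<close> by blast
        then show "(x', y') \<in> A \<and> (y', x') \<notin> A"
          using U_out[OF AV ls scY nmY _ _ xy(2)] a x' y' XV by blast
      qed
      then show ?thesis by blast
    next
      case F1: False
      show ?thesis
      proof (cases "\<exists>x\<in>X. \<exists>y\<in>Y. (y, x) \<in> A")
        case True
        then obtain x y where xy: "x \<in> X" "y \<in> Y" "(y, x) \<in> A" by blast
        have yX: "y \<notin> X" using xy \<open>X \<inter> Y = {}\<close> by blast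
        have a: "\<forall>x'\<in>X. (y, x') \<in> A \<and> (x', y) \<notin> A"
          using U_out[OF AV ls scX nmX _ yX xy(1) xy(3)] xy YV by blast
        have "P3" unfolding P3_def
        proof (intro ballI)
          fix x' y' assume x': "x' \<in> X" and y': "y' \<in> Y"
          have "x' \<notin> Y" using x' \<open>X \<inter> Y = {}\<close> by blast
          then show "(y', x') \<in> A \<and> (x', y') \<notin> A"
            using U_in[OF AV ls scY nmY _ _ xy(2)] a x' y' XV by blast
        qed
        then show ?thesis by blast
      next
        case False
        then have P1 unfolding P1_def using F1 by blast
        then show ?thesis by blast
      qed
    qed
  next
    case False
    then obtain w where w: "w \<in> X" "w \<in> Y" by blast
    have "\<not> Y \<subseteq> X" using assms(6) hX assms(7) unfolding maximal_weak_hub_def by blast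
    then obtain z where z: "z \<in> Y" "z \<notin> X" by blast
    have "\<not> X \<subseteq> Y" using assms(5) hY assms(7) unfolding maximal_weak_hub_def by blast
    then obtain x where x: "x \<in> X" "x \<notin> Y" by blast
    have "z \<noteq> w" using z w by blast
    then have "(z, w) \<in> A \<or> (w, z) \<in> A" using hub_semi[OF hY ls] z w
      unfolding semicomplete_on_def by blast
    then have False
    proof
      assume zw: "(z, w) \<in> A"
      have "\<forall>v\<in>X. (z, v) \<in> A \<and> (v, z) \<notin> A"
        using U_out[OF AV ls scX nmX _ z(2) w(1) zw] z YV by blast
      then have zx: "(z, x) \<in> A" using x by blast
      have bx: "\<forall>y\<in>Y. (y, x) \<in> A \<and> (x, y) \<notin> A"
        using U_in[OF AV ls scY nmY _ x(2) z(1) zx] x XV by blast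
      have noarc: "\<forall>c\<in>X. \<forall>d\<in>Y - X. (c, d) \<notin> A"
      proof (intro ballI)
        fix c d assume c: "c \<in> X" and d: "d \<in> Y - X"
        have "(d, x) \<in> A" using bx d by blast
        then show "(c, d) \<notin> A" using U_out[OF AV ls scX nmX _ _ x(1)] d c YV by blast
      qed
      have "(w, z) \<in> (A \<inter> Y \<times> Y)\<^sup>*" using scY w z unfolding strongly_connected_on_def by blast
      from leave[OF this w(1) z(2)] noarc show False by blast
    next
      assume wz: "(w, z) \<in> A"
      have "\<forall>v\<in>X. (v, z) \<in> A \<and> (z, v) \<notin> A"
        using U_in[OF AV ls scX nmX _ z(2) w(1) wz] z YV by blast
      have noarc: "\<forall>c\<in>Y. \<forall>d\<in>X - Y. (c, d) \<notin> A"
      proof (intro ballI)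
        fix c d assume c: "c \<in> Y" and d: "d \<in> X - Y"
        have "(d, z) \<in> A" using \<open>\<forall>v\<in>X. (v, z) \<in> A \<and> (z, v) \<notin> A\<close> d by blast
        then show "(c, d) \<notin> A" using U_out[OF AV ls scY nmY _ _ z(1)] d c XV by blast
      qed
      have "(w, x) \<in> (A \<inter> X \<times> X)\<^sup>*" using scX w x unfolding strongly_connected_on_def by blast
      from leave[OF this w(2) x(2)] noarc show False by blast
    qed
    then show ?thesis by blast
  qed
  show ?thesis unfolding Let_def P1_def[symmetric] P2_def[symmetric] P3_def[symmetric]
    using excl one by blast
qed

end
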